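(* Let $\mathcal L$ be an arbitrary finite lattice. Then the simplicial complex $\mathcal J(\mathcal L)$ collapses onto its subcomplex $\Delta(\bar{\mathcal L})$.
   Context: For a finite lattice $\mathcal L$ with minimum $\hat0$ and maximum $\hat1$, $\bar{\mathcal L}=\mathcal L\setminus\{\hat0,\hat1\}$. $\mathcal J(\mathcal L)$ is the simplicial complex with vertex set $\bar{\mathcal L}$ whose simplices are the nonempty subsets $S\subseteq\bar{\mathcal L}$ with $\bigwedge S\neq\hat0$. $\Delta(\bar{\mathcal L})$ is the order complex of $\bar{\mathcal L}$ (simplices = nonempty chains), which is a subcomplex of $\mathcal J(\mathcal L)$. *)

theory Defs
  imports Main
begin

text \<open>Abstract simplicial complexes are represented as families of nonempty finite
vertex sets (the faces).\<close>

definition elementary_collapse :: "'v set set \<Rightarrow> 'v set set \<Rightarrow> bool" where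
  "elementary_collapse K K' \<longleftrightarrow>
     (\<exists>\<sigma> \<tau>. \<sigma> \<in> K \<and> \<tau> \<in> K \<and> \<sigma> \<subset> \<tau> \<and> card \<tau> = card \<sigma> + 1 \<and>
        (\<forall>\<rho>\<in>K. \<sigma> \<subseteq> \<rho> \<longrightarrow> \<rho> = \<sigma> \<or> \<rho> = \<tau>) \<and>
        K' = K - {\<sigma>, \<tau>})"

definition collapses :: "'v set set \<Rightarrow> 'v set set \<Rightarrow> bool" where
  "collapses K L \<longleftrightarrow> elementary_collapse\<^sup>*\<^sup>* K L"

definition proper_part :: "'a::{finite,bounded_lattice} set" where
  "proper_part = UNIV - {bot, top}"

definition J_complex :: "'a::{finite,bounded_lattice} set set" where
  "J_complex = {S. S \<noteq> {} \<and> S \<subseteq> proper_part \<and> Inf_fin S \<noteq> bot}"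

definition order_complex :: "'a::{finite,bounded_lattice} set set" where
  "order_complex = {S. S \<noteq> {} \<and> S \<subseteq> proper_part \<and> Complete_Partial_Order.chain (\<le>) S}"

end

theory Submission
  imports Defs
begin


lemma cone_collapse_n:
  "\<forall>A K. card A = n \<longrightarrow> finite A \<longrightarrow> (\<forall>\<sigma>\<in>A. v \<notin> \<sigma> \<and> finite \<sigma>) \<longrightarrow> A \<subseteq> K \<longrightarrow>
     insert v ` A \<subseteq> K \<longrightarrow>
     (\<forall>\<rho>\<in>K - (A \<union> insert v ` A). \<forall>\<sigma>\<in>K. \<sigma> \<subseteq> \<rho> \<longrightarrow> \<sigma> \<in> K - (A \<union> insert v ` A)) \<longrightarrow>
     collapses K (K - (A \<union> insert v ` A))"
proof (induction n)
  case 0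
  show ?case
  proof (intro allI impI)
    fix A :: "'a set set" and K
    assume "card A = 0" "finite A"
    then have "A = {}" by simp
    then show "collapses K (K - (A \<union> insert v ` A))" by (simp add: collapses_def)
  qed
next
  case (Suc n)
  show ?case
  proof (intro allI impI)
    fix A :: "'a set set" and K
    assume cA: "card A = Suc n" and fA: "finite A" and vA: "\<forall>\<sigma>\<in>A. v \<notin> \<sigma> \<and> finite \<sigma>"
      and AK: "A \<subseteq> K" and IK: "insert v ` A \<subseteq> K"
      and dc: "\<forall>\<rho>\<in>K - (A \<union> insert v ` A). \<forall>\<sigma>\<in>K. \<sigma> \<subseteq> \<rho> \<longrightarrow> \<sigma> \<in> K - (A \<union> insert v ` A)"
    have "A \<noteq> {}" using cA by auto
    define m where "m = Max (card ` A)"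
    have "m \<in> card ` A" unfolding m_def using fA \<open>A \<noteq> {}\<close> by (intro Max_in) auto
    then obtain \<sigma> where sA: "\<sigma> \<in> A" and sm: "card \<sigma> = m" by blast
    have smax: "\<forall>\<tau>\<in>A. card \<tau> \<le> card \<sigma>"
      unfolding sm m_def using fA by (intro ballI Max_ge) auto
    have vs: "v \<notin> \<sigma>" "finite \<sigma>" using vA sA by auto
    have max2: "\<tau> = \<sigma>" if "\<tau> \<in> A" "\<sigma> \<subseteq> \<tau>" for \<tau>
    proof -
      have "finite \<tau>" using vA that(1) by blast
      moreover have "card \<tau> \<le> card \<sigma>" using smax that(1) by blast
      ultimately show ?thesis using card_seteq[of \<tau> \<sigma>] that(2) by blast
    qed
    define K' where "K' = K - {\<sigma>, insert v \<sigma>}"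
    have ec: "elementary_collapse K K'"
      unfolding elementary_collapse_def
    proof (intro exI conjI)
      show "\<sigma> \<in> K" using AK sA by auto
      show "insert v \<sigma> \<in> K" using IK sA by auto
      show "\<sigma> \<subset> insert v \<sigma>" using vs by auto
      show "card (insert v \<sigma>) = card \<sigma> + 1" using vs by auto
      show "K' = K - {\<sigma>, insert v \<sigma>}" by (simp add: K'_def)
      show "\<forall>\<rho>\<in>K. \<sigma> \<subseteq> \<rho> \<longrightarrow> \<rho> = \<sigma> \<or> \<rho> = insert v \<sigma>"
      proof (intro ballI impI)
        fix \<rho> assume rK: "\<rho> \<in> K" and sr: "\<sigma> \<subseteq> \<rho>"
        show "\<rho> = \<sigma> \<or> \<rho> = insert v \<sigma>"
        proof (cases "\<rho> \<in> A")
          case True then show ?thesis using max2[OF True sr] by blast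
        next
          case F1: False
          show ?thesis
          proof (cases "\<rho> \<in> insert v ` A")
            case True
            then obtain \<tau> where tA: "\<tau> \<in> A" and rt: "\<rho> = insert v \<tau>" by blast
            have "\<sigma> \<subseteq> \<tau>" using sr rt vs by blast
            then show ?thesis using max2[OF tA] rt by blast
          next
            case False
            have sK: "\<sigma> \<in> K" using AK sA by blast
            have "\<rho> \<in> K - (A \<union> insert v ` A)" using rK F1 False by blast
            then have "\<sigma> \<in> K - (A \<union> insert v ` A)" using dc[rule_format, OF _ sK sr] by blast
            then show ?thesis using sA by blast
          qed
        qed
      qed
    qed
    define A' where "A' = A - {\<sigma>}"
    have inj: "insert v \<tau> = insert v \<sigma> \<longleftrightarrow> \<tau> = \<sigma>" if "\<tau> \<in> A" for \<tau>
    proof -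
      have "v \<notin> \<tau>" using vA that by blast
      then show ?thesis using vs(1) by (simp add: insert_ident)
    qed
    have sv: "\<sigma> \<noteq> insert v \<sigma>" using vs by blast
    have eq: "K' - (A' \<union> insert v ` A') = K - (A \<union> insert v ` A)"
    proof
      show "K' - (A' \<union> insert v ` A') \<subseteq> K - (A \<union> insert v ` A)"
      proof
        fix y assume y: "y \<in> K' - (A' \<union> insert v ` A')"
        then have yK: "y \<in> K" and y1: "y \<noteq> \<sigma>" and y2: "y \<noteq> insert v \<sigma>"
          and y3: "y \<notin> A'" and y4: "y \<notin> insert v ` A'" unfolding K'_def by blast+
        have "y \<notin> A" using y1 y3 unfolding A'_def by blast
        moreover have "y \<notin> insert v ` A"
        proof
          assume "y \<in> insert v ` A"
          then obtain \<tau> where t: "\<tau> \<in> A" "y = insert v \<tau>" by blast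
          then have "\<tau> \<noteq> \<sigma>" using y2 by blast
          then have "\<tau> \<in> A'" using t(1) unfolding A'_def by blast
          then show False using y4 t(2) by blast
        qed
        ultimately show "y \<in> K - (A \<union> insert v ` A)" using yK by blast
      qed
    next
      show "K - (A \<union> insert v ` A) \<subseteq> K' - (A' \<union> insert v ` A')"
      proof
        fix y assume y: "y \<in> K - (A \<union> insert v ` A)"
        then have "y \<noteq> \<sigma>" "y \<noteq> insert v \<sigma>" using sA by blast+
        moreover have "y \<notin> A'" "y \<notin> insert v ` A'" using y unfolding A'_def by blast+
        ultimately show "y \<in> K' - (A' \<union> insert v ` A')" using y unfolding K'_def by blast
      qed
    qed
    have c1: "card A' = n" unfolding A'_def using cA sA fA by (simp add: card_Diff_singleton)
    have c2: "finite A'" unfolding A'_def using fA by blast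
    have c3: "\<forall>\<sigma>\<in>A'. v \<notin> \<sigma> \<and> finite \<sigma>" unfolding A'_def using vA by blast
    have c4: "A' \<subseteq> K'"
    proof
      fix \<tau> assume t: "\<tau> \<in> A'"
      then have "\<tau> \<in> A" "\<tau> \<noteq> \<sigma>" unfolding A'_def by blast+
      moreover have "\<tau> \<noteq> insert v \<sigma>" using vA \<open>\<tau> \<in> A\<close> by blast
      ultimately show "\<tau> \<in> K'" using AK unfolding K'_def by blast
    qed
    have c5: "insert v ` A' \<subseteq> K'"
    proof
      fix y assume "y \<in> insert v ` A'"
      then obtain \<tau> where t: "\<tau> \<in> A'" "y = insert v \<tau>" by blast
      then have tA: "\<tau> \<in> A" "\<tau> \<noteq> \<sigma>" unfolding A'_def by blast+
      have "y \<in> K" using IK tA(1) t(2) by blast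
      moreover have "y \<noteq> \<sigma>" using t(2) vs(1) by blast
      moreover have "y \<noteq> insert v \<sigma>" using inj[OF tA(1)] tA(2) t(2) by blast
      ultimately show "y \<in> K'" unfolding K'_def by blast
    qed
    have c6: "\<forall>\<rho>\<in>K' - (A' \<union> insert v ` A'). \<forall>\<sigma>'\<in>K'. \<sigma>' \<subseteq> \<rho> \<longrightarrow> \<sigma>' \<in> K' - (A' \<union> insert v ` A')"
      unfolding eq using dc unfolding K'_def by blast
    have "collapses K' (K' - (A' \<union> insert v ` A'))"
      using spec[OF spec[OF Suc.IH, of A'], of K'] c1 c2 c3 c4 c5 c6 by blast
    then have "collapses K' (K - (A \<union> insert v ` A))" using eq by simp
    then show "collapses K (K - (A \<union> insert v ` A))"
      using ec unfolding collapses_def by (rule converse_rtranclp_into_rtranclp[rotated])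
  qed
qed

lemma cone_collapse:
  assumes "finite A" "\<forall>\<sigma>\<in>A. v \<notin> \<sigma> \<and> finite \<sigma>" "A \<subseteq> K" "insert v ` A \<subseteq> K"
     "\<forall>\<rho>\<in>K - (A \<union> insert v ` A). \<forall>\<sigma>\<in>K. \<sigma> \<subseteq> \<rho> \<longrightarrow> \<sigma> \<in> K - (A \<union> insert v ` A)"
  shows "collapses K (K - (A \<union> insert v ` A))"
  using spec[OF spec[OF cone_collapse_n[of "card A" v], of A], of K] assms by blast



definition NC :: "'a::{finite,bounded_lattice} set \<Rightarrow> 'a set" where
  "NC S = {s\<in>S. \<exists>t\<in>S. \<not> s \<le> t \<and> \<not> t \<le> s}"

definition nu :: "'a::{finite,bounded_lattice} set \<Rightarrow> 'a" where
  "nu S = Inf_fin (NC S)"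

definition remJ :: "'a::{finite,bounded_lattice} set \<Rightarrow> 'a set set" where
  "remJ X = {S \<in> J_complex. NC S = {} \<or> nu S \<notin> X}"

lemma NC_sub: "NC S \<subseteq> S" by (auto simp: NC_def)

lemma NC_mono: "\<sigma> \<subseteq> \<rho> \<Longrightarrow> NC \<sigma> \<subseteq> NC \<rho>" by (auto simp: NC_def)

lemma nu_mono: "\<sigma> \<subseteq> \<rho> \<Longrightarrow> NC \<sigma> \<noteq> {} \<Longrightarrow> nu \<rho> \<le> nu \<sigma>"
  unfolding nu_def by (rule Inf_fin.subset_imp) (auto dest: NC_mono)

lemma NC_insert: assumes "\<forall>s\<in>S. y \<le> s \<or> s \<le> y" shows "NC (insert y S) = NC S"
  using assms unfolding NC_def by auto

lemma nu_comp:
  fixes S :: "'a::{finite,bounded_lattice} set"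
  assumes "NC S \<noteq> {}" "s \<in> S" shows "nu S \<le> s \<or> s \<le> nu S"
proof (cases "s \<in> NC S")
  case True then show ?thesis unfolding nu_def by (auto intro: Inf_fin.coboundedI)
next
  case False
  then have comp: "\<forall>t\<in>S. s \<le> t \<or> t \<le> s" using assms(2) by (auto simp: NC_def)
  show ?thesis
  proof (cases "\<exists>n\<in>NC S. n \<le> s")
    case True
    then obtain n where "n \<in> NC S" "n \<le> s" by auto
    then have "nu S \<le> n" unfolding nu_def by (auto intro: Inf_fin.coboundedI)
    then show ?thesis using \<open>n \<le> s\<close> by auto
  next
    case False
    then have "\<forall>n\<in>NC S. s \<le> n" using comp NC_sub by blast
    then have "s \<le> nu S" unfolding nu_def using assms(1) by (auto intro: Inf_fin.boundedI)
    then show ?thesis by auto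
  qed
qed

lemma NC_ins_nu: "NC S \<noteq> {} \<Longrightarrow> NC (insert (nu S) S) = NC S"
  by (rule NC_insert) (use nu_comp in blast)

lemma NC_del_nu: assumes "NC S \<noteq> {}" shows "NC (S - {nu S}) = NC S"
proof (cases "nu S \<in> S")
  case True
  have "NC S = NC (insert (nu S) (S - {nu S}))" using True by (simp add: insert_absorb)
  also have "\<dots> = NC (S - {nu S})" by (rule NC_insert) (use nu_comp assms in blast)
  finally show ?thesis by simp
qed simp

lemma nu_del: "NC S \<noteq> {} \<Longrightarrow> nu (S - {nu S}) = nu S"
proof -
  assume a: "NC S \<noteq> {}"
  have eq: "NC (S - {nu S}) = NC S" using NC_del_nu a by blast
  have "nu (S - {nu S}) = Inf_fin (NC (S - {nu S}))" by (rule nu_def)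
  also have "\<dots> = Inf_fin (NC S)" using eq by simp
  also have "\<dots> = nu S" by (simp add: nu_def)
  finally show ?thesis .
qed

lemma nu_ins: "NC S \<noteq> {} \<Longrightarrow> nu (insert (nu S) S) = nu S"
proof -
  assume a: "NC S \<noteq> {}"
  have eq: "NC (insert (nu S) S) = NC S" using NC_ins_nu a by blast
  have "nu (insert (nu S) S) = Inf_fin (NC (insert (nu S) S))" by (rule nu_def)
  also have "\<dots> = Inf_fin (NC S)" using eq by simp
  also have "\<dots> = nu S" by (simp add: nu_def)
  finally show ?thesis .
qed

lemma J_memI: "S \<noteq> {} \<Longrightarrow> S \<subseteq> proper_part \<Longrightarrow> Inf_fin S \<noteq> bot \<Longrightarrow> S \<in> J_complex"
  by (simp add: J_complex_def)

lemma nu_ge_Inf: "NC S \<noteq> {} \<Longrightarrow> Inf_fin S \<le> nu S"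
  unfolding nu_def by (rule Inf_fin.subset_imp) (auto simp: NC_sub)

lemma nu_pp: assumes "S \<in> J_complex" "NC S \<noteq> {}" shows "nu S \<in> proper_part"
proof -
  have "Inf_fin S \<le> nu S" using nu_ge_Inf assms by auto
  then have "nu S \<noteq> bot" using assms(1) by (auto simp: J_complex_def bot_unique)
  moreover obtain n where "n \<in> NC S" using assms by auto
  then have "nu S \<le> n" "n \<in> proper_part" using assms NC_sub unfolding nu_def
    by (auto intro: Inf_fin.coboundedI simp: J_complex_def)
  then have "nu S \<noteq> top" by (auto simp: proper_part_def top_unique)
  ultimately show ?thesis by (simp add: proper_part_def)
qed

lemma J_ins: assumes "S \<in> J_complex" "NC S \<noteq> {}" shows "insert (nu S) S \<in> J_complex"
proof -
  have ne: "S \<noteq> {}" using assms by (auto simp: J_complex_def)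
  have "Inf_fin (insert (nu S) S) = inf (nu S) (Inf_fin S)" using ne by simp
  also have "\<dots> = Inf_fin S" using nu_ge_Inf[OF assms(2)] by (simp add: inf_absorb2)
  finally show ?thesis using assms nu_pp[OF assms] by (auto simp: J_complex_def)
qed

lemma J_del: assumes "S \<in> J_complex" "NC S \<noteq> {}" "nu S \<in> S" shows "S - {nu S} \<in> J_complex"
proof -
  have nuN: "nu S \<notin> NC S"
  proof
    assume "nu S \<in> NC S"
    then obtain t where "t \<in> S" "\<not> nu S \<le> t \<and> \<not> t \<le> nu S" by (auto simp: NC_def)
    then show False using nu_comp[OF assms(2)] by blast
  qed
  have sub: "NC S \<subseteq> S - {nu S}" using NC_sub nuN by auto
  then have ne: "S - {nu S} \<noteq> {}" using assms(2) by auto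
  have le: "Inf_fin (S - {nu S}) \<le> nu S"
  proof -
    have "Inf_fin (S - {nu S}) \<le> Inf_fin (NC S)"
      by (rule Inf_fin.subset_imp[OF sub assms(2)]) simp
    then show ?thesis by (simp only: nu_def)
  qed
  have "Inf_fin S = Inf_fin (insert (nu S) (S - {nu S}))" using assms(3) by (simp add: insert_absorb)
  also have "\<dots> = inf (nu S) (Inf_fin (S - {nu S}))" by (rule Inf_fin.insert[OF _ ne]) simp
  also have "\<dots> = Inf_fin (S - {nu S})" using le by (simp add: inf_absorb2)
  finally show ?thesis using assms ne by (auto simp: J_complex_def)
qed

lemma A_ins:
  assumes "T \<in> J_complex" "NC T \<noteq> {}" "nu T = x"
  shows "insert x T \<in> J_complex" "NC (insert x T) \<noteq> {}" "nu (insert x T) = x"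
  using J_ins[OF assms(1,2)] NC_ins_nu[OF assms(2)] nu_ins[OF assms(2)] assms(2,3) by auto

lemma step:
  fixes X :: "'a::{finite,bounded_lattice} set"
  assumes ds: "\<forall>x y. y \<le> x \<longrightarrow> x \<in> X \<longrightarrow> y \<in> X" and xX: "x \<in> X"
  shows "collapses (remJ (X - {x})) (remJ X)"
proof -
  define A where "A = {S \<in> J_complex. NC S \<noteq> {} \<and> nu S = x \<and> x \<notin> S}"
  let ?K = "remJ (X - {x})"
  have eq: "?K - (A \<union> insert x ` A) = remJ X"
  proof
    show "?K - (A \<union> insert x ` A) \<subseteq> remJ X"
    proof
      fix S assume S: "S \<in> ?K - (A \<union> insert x ` A)"
      show "S \<in> remJ X"
      proof (rule ccontr)
        assume "S \<notin> remJ X"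
        then have SJ: "S \<in> J_complex" and ne: "NC S \<noteq> {}" and nx: "nu S = x"
          using S by (auto simp: remJ_def)
        show False
        proof (cases "x \<in> S")
          case True
          have a1: "S - {x} \<in> J_complex" using J_del[OF SJ ne] nx True by simp
          have a2: "NC (S - {x}) \<noteq> {}" using NC_del_nu[OF ne] ne nx by simp
          have a3: "nu (S - {x}) = x" using nu_del[OF ne] nx by simp
          have "S - {x} \<in> A" unfolding A_def using a1 a2 a3 by blast
          moreover have "S = insert x (S - {x})" using True by blast
          ultimately have "S \<in> insert x ` A" by (rule rev_image_eqI)
          then show False using S by blast
        next
          case False
          then have "S \<in> A" unfolding A_def using SJ ne nx by blast
          then show False using S by blast
        qed
      qed
    qed
  next
    show "remJ X \<subseteq> ?K - (A \<union> insert x ` A)"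
    proof
      fix S assume S: "S \<in> remJ X"
      have "S \<notin> insert x ` A"
      proof
        assume "S \<in> insert x ` A"
        then obtain T where "T \<in> A" "S = insert x T" by auto
        then have "T \<in> J_complex" "NC T \<noteq> {}" "nu T = x" by (auto simp: A_def)
        from A_ins[OF this] \<open>S = insert x T\<close> S xX show False by (auto simp: remJ_def)
      qed
      moreover have "S \<notin> A"
      proof
        assume "S \<in> A"
        then have "NC S \<noteq> {}" "nu S = x" unfolding A_def by blast+
        then show False using S xX unfolding remJ_def by blast
      qed
      moreover have "S \<in> ?K" using S unfolding remJ_def by blast
      ultimately show "S \<in> ?K - (A \<union> insert x ` A)" by blast
    qed
  qed
  have "collapses ?K (?K - (A \<union> insert x ` A))"
  proof (rule cone_collapse)
    show "finite A" by simp
    show "\<forall>\<sigma>\<in>A. x \<notin> \<sigma> \<and> finite \<sigma>" by (auto simp: A_def)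
    show "A \<subseteq> ?K" by (auto simp: A_def remJ_def)
    show "insert x ` A \<subseteq> ?K"
    proof
      fix S assume "S \<in> insert x ` A"
      then obtain T where T: "T \<in> A" "S = insert x T" by auto
      then have "T \<in> J_complex" "NC T \<noteq> {}" "nu T = x" by (auto simp: A_def)
      from A_ins[OF this] T(2) show "S \<in> ?K" by (auto simp: remJ_def)
    qed
    show "\<forall>\<rho>\<in>?K - (A \<union> insert x ` A). \<forall>\<sigma>\<in>?K. \<sigma> \<subseteq> \<rho> \<longrightarrow> \<sigma> \<in> ?K - (A \<union> insert x ` A)"
      unfolding eq
    proof (intro ballI impI)
      fix \<rho> \<sigma> assume r: "\<rho> \<in> remJ X" and s: "\<sigma> \<in> ?K" and sr: "\<sigma> \<subseteq> \<rho>"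
      show "\<sigma> \<in> remJ X"
      proof (rule ccontr)
        assume "\<sigma> \<notin> remJ X"
        then have ne: "NC \<sigma> \<noteq> {}" and nX: "nu \<sigma> \<in> X" using s by (auto simp: remJ_def)
        have "NC \<rho> \<noteq> {}" using NC_mono[OF sr] ne by auto
        moreover have "nu \<rho> \<in> X" using ds[rule_format, OF nu_mono[OF sr ne] nX] .
        ultimately show False using r by (auto simp: remJ_def)
      qed
    qed
  qed
  then show ?thesis using eq by simp
qed

lemma downsets:
  "\<forall>X::'a::{finite,bounded_lattice} set. card X = n \<longrightarrow> (\<forall>x y. y \<le> x \<longrightarrow> x \<in> X \<longrightarrow> y \<in> X) \<longrightarrow>
     collapses J_complex (remJ X)"
proof (induction n)
  case 0
  then show ?case by (auto simp: collapses_def remJ_def)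
next
  case (Suc n)
  show ?case
  proof (intro allI impI)
    fix X :: "'a set" assume c: "card X = Suc n" and ds: "\<forall>x y. y \<le> x \<longrightarrow> x \<in> X \<longrightarrow> y \<in> X"
    then have "X \<noteq> {}" by auto
    then obtain x where xX: "x \<in> X" and xm: "\<forall>b\<in>X. x \<le> b \<longrightarrow> x = b"
      using finite_has_maximal[of X] by auto
    have ds': "\<forall>z y. y \<le> z \<longrightarrow> z \<in> X - {x} \<longrightarrow> y \<in> X - {x}"
    proof (intro allI impI)
      fix z y :: 'a assume yz: "y \<le> z" and z: "z \<in> X - {x}"
      have "y \<in> X" using ds[rule_format, OF yz] z by blast
      moreover have "y \<noteq> x"
      proof
        assume "y = x"
        then have "x = z" using xm yz z by blast
        then show False using z by blast
      qed
      ultimately show "y \<in> X - {x}" by blast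
    qed
    have "collapses J_complex (remJ (X - {x}))"
      using spec[OF Suc.IH, of "X - {x}"] ds' c xX by (simp add: card_Diff_singleton)
    moreover have "collapses (remJ (X - {x})) (remJ X)" by (rule step[OF ds xX])
    ultimately show "collapses J_complex (remJ X)" unfolding collapses_def by (rule rtranclp_trans)
  qed
qed

lemma chain_min:
  fixes S :: "'a::{finite,bounded_lattice} set"
  shows "finite S \<Longrightarrow> S \<noteq> {} \<Longrightarrow> NC S = {} \<Longrightarrow> \<exists>m\<in>S. \<forall>s\<in>S. m \<le> s"
proof (induction S rule: finite_ne_induct)
  case (singleton x) then show ?case by auto
next
  case (insert x F)
  have "NC F = {}" using insert.prems NC_mono[of F "insert x F"] by auto
  then obtain m where m: "m \<in> F" "\<forall>s\<in>F. m \<le> s" using insert.IH by auto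
  have "x \<le> m \<or> m \<le> x" using insert.prems m(1) by (auto simp: NC_def)
  then show ?case
  proof
    assume "x \<le> m"
    then have "\<forall>s\<in>insert x F. x \<le> s" using m(2) by (auto intro: order_trans)
    then show ?thesis by blast
  next
    assume "m \<le> x"
    then have "\<forall>s\<in>insert x F. m \<le> s" using m(2) by auto
    then show ?thesis using m(1) by blast
  qed
qed

lemma chain_NC: "Complete_Partial_Order.chain (\<le>) S \<longleftrightarrow> NC S = {}"
  unfolding NC_def chain_def by blast

lemma chain_Inf:
  fixes S :: "'a::{finite,bounded_lattice} set"
  assumes a: "S \<noteq> {}" "S \<subseteq> proper_part" "NC S = {}"
  shows "Inf_fin S \<noteq> bot"
proof -
  obtain m where m: "m \<in> S" "\<forall>s\<in>S. m \<le> s" using chain_min[OF finite a(1) a(3)] by blast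
  have "m \<le> Inf_fin S" using m(2) a(1) by (intro Inf_fin.boundedI) simp_all
  moreover have "Inf_fin S \<le> m" using m(1) by (intro Inf_fin.coboundedI) simp_all
  ultimately have "Inf_fin S = m" by (rule order.antisym[rotated])
  moreover have "m \<noteq> bot" using m(1) a(2) unfolding proper_part_def by blast
  ultimately show ?thesis by simp
qed

lemma final: "remJ (UNIV :: 'a::{finite,bounded_lattice} set) = order_complex"
proof
  show "remJ (UNIV :: 'a set) \<subseteq> order_complex"
  proof
    fix S :: "'a set" assume "S \<in> remJ UNIV"
    then have "S \<in> J_complex" "NC S = {}" unfolding remJ_def by blast+
    then show "S \<in> order_complex" unfolding J_complex_def order_complex_def chain_NC by blast
  qed
next
  show "order_complex \<subseteq> remJ (UNIV :: 'a set)"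
  proof
    fix S :: "'a set" assume "S \<in> order_complex"
    then have a: "S \<noteq> {}" "S \<subseteq> proper_part" "NC S = {}"
      unfolding order_complex_def chain_NC by blast+
    then have "S \<in> J_complex" unfolding J_complex_def using chain_Inf[OF a] by blast
    then show "S \<in> remJ UNIV" unfolding remJ_def using a(3) by blast
  qed
qed

theorem mainTheorem6:
  shows "collapses (J_complex :: 'a::{finite,bounded_lattice} set set) order_complex"
proof -
  have ds: "\<forall>x y. y \<le> x \<longrightarrow> x \<in> (UNIV::'a set) \<longrightarrow> y \<in> UNIV" by simp
  have "collapses J_complex (remJ (UNIV::'a set))"
    using spec[OF downsets[of "card (UNIV::'a set)"], of UNIV] ds by blast
  also have "remJ (UNIV::'a set) = order_complex" by (rule final)
  finally show ?thesis .
qed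

end
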